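(* Let $L,k,N,a,r,\epsilon,p,l_j,t_j$, the state $|\phi_{final}\rangle$ and the measurement outcome $m_k$ be as in the context. Let $s_0\in\{0,1,\dots,r-1\}$ be such that $2^{l_k+1}\cdot\frac{s_0}{r}$ is an integer, i.e. $\frac{s_0}{r}=0.c_1c_2\cdots c_{l_k+1}$ in binary. Then the probability that $m_k=c_{l_k}c_{l_k+1}0\cdots0$ (a $t_k$-bit string) is at least $\frac{1}{r}$.
   Context: $L\ge1$, $k\ge1$ integers with $k\mid L$; $N$ an $L$-bit integer; $a<N$ positive with $\gcd(a,N)=1$; $r$ the order of $a$ mod $N$; $\epsilon>0$. Bit strings are identified with binary integers (most significant bit first). $|\psi_{t,\omega}\rangle=QFT^{-1}\frac{1}{\sqrt{2^t}}\sum_{j=0}^{2^t-1}e^{2\pi ij\omega}|j\rangle$ with $QFT|j\rangle=\frac{1}{\sqrt{2^t}}\sum_{x=0}^{2^t-1}e^{2\pi ijx/2^t}|x\rangle$. $|u_s\rangle=\frac{1}{\sqrt r}\sum_{q=0}^{r-1}e^{-2\pi isq/r}|a^q\bmod N\rangle$ ($L$ qubits), orthonormal for $s=0,\dots,r-1$. Parameters: $p=\lceil\log_2(2+\frac{k}{2\epsilon})\rceil$; $l_j=(j-1)\frac Lk+1$ for $j=1,\dots,k$, $l_{k+1}=2L$; $t_j=l_{j+1}+2-l_j+p$. Registers $A_j$ ($t_j$ qubits, $j=1,\dots,k$) and $C$ ($L$ qubits) are in the state $|\phi_{final}\rangle=\frac{1}{\sqrt r}\sum_{s=0}^{r-1}\big(\bigotimes_{j=1}^k|\psi_{t_j,2^{l_j-1}s/r}\rangle_{A_j}\big)|u_s\rangle_C$,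 and $m_k$ is the $t_k$-bit outcome of measuring register $A_k$ in the computational basis. *)

theory Defs
  imports Complex_Main "HOL-Number_Theory.Number_Theory" "HOL-Library.FuncSet"
begin

definition qft_inv :: "nat \<Rightarrow> (nat \<Rightarrow> complex) \<Rightarrow> nat \<Rightarrow> complex" where
  "qft_inv t v x = (1 / complex_of_real (sqrt (2 ^ t))) *
      (\<Sum>j<2 ^ t. v j * cis (- 2 * pi * real j * real x / 2 ^ t))"

definition psi_amp :: "nat \<Rightarrow> real \<Rightarrow> nat \<Rightarrow> complex" where
  "psi_amp t \<omega> x = qft_inv t (\<lambda>j. cis (2 * pi * real j * \<omega>) / complex_of_real (sqrt (2 ^ t))) x"

definition u_amp :: "nat \<Rightarrow> nat \<Rightarrow> nat \<Rightarrow> nat \<Rightarrow> nat \<Rightarrow> complex" where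
  "u_amp N a r s c = (1 / complex_of_real (sqrt (real r))) *
      (\<Sum>q<r. if c = a ^ q mod N then cis (- 2 * pi * real s * real q / real r) else 0)"

definition p_param :: "nat \<Rightarrow> real \<Rightarrow> nat" where
  "p_param k \<epsilon> = nat \<lceil>log 2 (2 + real k / (2 * \<epsilon>))\<rceil>"

definition l_param :: "nat \<Rightarrow> nat \<Rightarrow> nat \<Rightarrow> nat" where
  "l_param L k j = (if j = k + 1 then 2 * L else (j - 1) * (L div k) + 1)"

definition t_param :: "nat \<Rightarrow> nat \<Rightarrow> real \<Rightarrow> nat \<Rightarrow> nat" where
  "t_param L k \<epsilon> j = l_param L k (j + 1) + 2 - l_param L k j + p_param k \<epsilon>"

text \<open>Amplitude of |phi_final> at the computational basis state
  |xs 1>_{A_1} ... |xs k>_{A_k} |c>_C.\<close>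
definition phi_final_amp ::
  "nat \<Rightarrow> nat \<Rightarrow> real \<Rightarrow> nat \<Rightarrow> nat \<Rightarrow> nat \<Rightarrow> (nat \<Rightarrow> nat) \<Rightarrow> nat \<Rightarrow> complex" where
  "phi_final_amp L k \<epsilon> N a r xs c = (1 / complex_of_real (sqrt (real r))) *
     (\<Sum>s<r. (\<Prod>j\<in>{1..k}. psi_amp (t_param L k \<epsilon> j)
                   (2 ^ (l_param L k j - 1) * real s / real r) (xs j)) * u_amp N a r s c)"

definition prob_Ak :: "nat \<Rightarrow> nat \<Rightarrow> real \<Rightarrow> nat \<Rightarrow> nat \<Rightarrow> nat \<Rightarrow> nat \<Rightarrow> real" where
  "prob_Ak L k \<epsilon> N a r m =
     (\<Sum>xs \<in> {xs \<in> PiE {1..k} (\<lambda>j. {..<2 ^ t_param L k \<epsilon> j}). xs k = m}.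
        \<Sum>c<2 ^ L. (cmod (phi_final_amp L k \<epsilon> N a r xs c))\<^sup>2)"

text \<open>i-th binary digit after the point of s/r, i.e. s/r = 0.c_1 c_2 ...\<close>
definition bin_digit :: "nat \<Rightarrow> nat \<Rightarrow> nat \<Rightarrow> nat" where
  "bin_digit s r i = (2 ^ i * s div r) mod 2"

end

theory Submission
  imports Defs
begin

lemma cis_geom:
  assumes n: "n > 0"
  shows "(\<Sum>x<n. cis (2 * pi * real_of_int d * real x / real n)) = (if int n dvd d then of_nat n else 0)"
proof -
  define z where "z = cis (2 * pi * real_of_int d / real n)"
  have zx: "cis (2 * pi * real_of_int d * real x / real n) = z ^ x" for x
    by (simp add: z_def DeMoivre mult_ac)
  have zn: "z ^ n = 1"
  proof -
    have "z ^ n = cis (2 * pi * real_of_int d)" using n by (simp add: z_def DeMoivre)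
    also have "\<dots> = 1" by (rule cis_multiple_2pi) simp
    finally show ?thesis .
  qed
  have z1: "z = 1 \<longleftrightarrow> int n dvd d"
  proof
    assume "z = 1"
    then have "cos (2 * pi * real_of_int d / real n) = 1" by (simp add: z_def complex_eq_iff)
    then obtain m :: int where m: "2 * pi * real_of_int d / real n = real_of_int m * 2 * pi"
      by (subst (asm) cos_one_2pi_int) blast
    hence "real_of_int d = real_of_int (m * int n)" using n by (simp add: field_simps)
    hence "d = m * int n" by linarith
    thus "int n dvd d" by simp
  next
    assume "int n dvd d"
    then obtain m where "d = int n * m" by blast
    hence "2 * pi * real_of_int d / real n = 2 * pi * real_of_int m" using n by simp
    thus "z = 1" by (simp add: z_def)
  qed
  show ?thesis unfolding zx sum_gp_strict using z1 zn by auto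
qed


lemma orth_expand:
  fixes f :: "'s \<Rightarrow> 'c \<Rightarrow> complex" and \<alpha> :: "'s \<Rightarrow> complex"
  assumes "finite S" "finite C"
    and orth: "\<And>s s'. s \<in> S \<Longrightarrow> s' \<in> S \<Longrightarrow> (\<Sum>c\<in>C. f s c * cnj (f s' c)) = (if s = s' then 1 else 0)"
  shows "(\<Sum>c\<in>C. (cmod (\<Sum>s\<in>S. \<alpha> s * f s c))\<^sup>2) = (\<Sum>s\<in>S. (cmod (\<alpha> s))\<^sup>2)"
proof -
  have "complex_of_real (\<Sum>c\<in>C. (cmod (\<Sum>s\<in>S. \<alpha> s * f s c))\<^sup>2)
      = (\<Sum>c\<in>C. (\<Sum>s\<in>S. \<alpha> s * f s c) * cnj (\<Sum>s\<in>S. \<alpha> s * f s c))"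
    by (simp only: of_real_sum complex_norm_square)
  also have "\<dots> = (\<Sum>c\<in>C. \<Sum>s\<in>S. \<Sum>s'\<in>S. \<alpha> s * cnj (\<alpha> s') * (f s c * cnj (f s' c)))"
    by (simp add: sum_product mult_ac)
  also have "\<dots> = (\<Sum>s\<in>S. \<Sum>c\<in>C. \<Sum>s'\<in>S. \<alpha> s * cnj (\<alpha> s') * (f s c * cnj (f s' c)))"
    by (rule sum.swap)
  also have "\<dots> = (\<Sum>s\<in>S. \<Sum>s'\<in>S. \<Sum>c\<in>C. \<alpha> s * cnj (\<alpha> s') * (f s c * cnj (f s' c)))"
    by (rule sum.cong[OF refl], rule sum.swap)
  also have "\<dots> = (\<Sum>s\<in>S. \<Sum>s'\<in>S. \<alpha> s * cnj (\<alpha> s') * (\<Sum>c\<in>C. f s c * cnj (f s' c)))"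
    by (simp add: sum_distrib_left)
  also have "\<dots> = (\<Sum>s\<in>S. \<Sum>s'\<in>S. if s' = s then \<alpha> s * cnj (\<alpha> s) else 0)"
    by (intro sum.cong refl) (auto simp: orth)
  also have "\<dots> = (\<Sum>s\<in>S. \<alpha> s * cnj (\<alpha> s))"
    using assms(1) by (simp add: sum.delta)
  also have "\<dots> = complex_of_real (\<Sum>s\<in>S. (cmod (\<alpha> s))\<^sup>2)"
    by (simp only: of_real_sum complex_norm_square)
  finally show ?thesis using of_real_eq_iff by blast
qed

lemma qft_orth:
  assumes "j < 2 ^ t" "j' < 2 ^ t"
  shows "(\<Sum>x<2^t. (cis (- 2 * pi * real j * real x / 2 ^ t) / complex_of_real (sqrt (2 ^ t)))
          * cnj (cis (- 2 * pi * real j' * real x / 2 ^ t) / complex_of_real (sqrt (2 ^ t))))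
        = (if j = j' then 1 else 0)"
proof -
  have T: "(2::nat)^t > 0" by simp
  have e: "(cis (- 2 * pi * real j * real x / 2 ^ t) / complex_of_real (sqrt (2 ^ t)))
          * cnj (cis (- 2 * pi * real j' * real x / 2 ^ t) / complex_of_real (sqrt (2 ^ t)))
        = cis (2 * pi * real_of_int (int j' - int j) * real x / real (2^t)) / of_nat (2^t)" for x
  proof -
    have s: "complex_of_real (sqrt (2 ^ t)) * complex_of_real (sqrt (2 ^ t)) = of_nat (2^t)"
      by (simp flip: of_real_mult)
    have a: "- 2 * pi * real j * real x / 2 ^ t + 2 * pi * real j' * real x / 2 ^ t
       = 2 * pi * real_of_int (int j' - int j) * real x / real (2^t)"
      by (simp add: field_simps)
    have "(cis (- 2 * pi * real j * real x / 2 ^ t) / complex_of_real (sqrt (2 ^ t)))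
          * cnj (cis (- 2 * pi * real j' * real x / 2 ^ t) / complex_of_real (sqrt (2 ^ t)))
        = (cis (- 2 * pi * real j * real x / 2 ^ t) * cis (2 * pi * real j' * real x / 2 ^ t))
          / (complex_of_real (sqrt (2 ^ t)) * complex_of_real (sqrt (2 ^ t)))"
      by (simp add: cis_cnj)
    also have "\<dots> = cis (2 * pi * real_of_int (int j' - int j) * real x / real (2^t)) / of_nat (2^t)"
      unfolding s cis_mult a ..
    finally show ?thesis .
  qed
  have d: "int (2^t) dvd (int j' - int j) \<longleftrightarrow> j = j'"
  proof
    assume h: "int (2^t) dvd (int j' - int j)"
    obtain T where T: "T = (2::nat)^t" by blast
    have "\<bar>int j' - int j\<bar> < int T" using assms T by linarith
    with h T show "j = j'" using dvd_imp_le_int[of "int j' - int j" "int T"] by fastforce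
  qed simp
  show ?thesis unfolding e sum_divide_distrib[symmetric] cis_geom[OF T] using d by simp
qed


lemma qft_unitary:
  "(\<Sum>x<2^t. (cmod (qft_inv t v x))\<^sup>2) = (\<Sum>j<2^t. (cmod (v j))\<^sup>2)"
proof -
  let ?f = "\<lambda>j x. cis (- 2 * pi * real j * real x / 2 ^ t) / complex_of_real (sqrt (2 ^ t))"
  have q: "qft_inv t v x = (\<Sum>j<2^t. v j * ?f j x)" for x
    unfolding qft_inv_def by (simp add: sum_distrib_left mult_ac)
  show ?thesis unfolding q
  proof (rule orth_expand)
    fix s s' assume "s \<in> {..<(2::nat)^t}" "s' \<in> {..<(2::nat)^t}"
    then show "(\<Sum>c\<in>{..<2^t}. ?f s c * cnj (?f s' c)) = (if s = s' then 1 else 0)"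
      by (intro qft_orth) auto
  qed auto
qed

lemma psi_norm: "(\<Sum>x<2^t. (cmod (psi_amp t \<omega> x))\<^sup>2) = 1"
proof -
  have "(\<Sum>x<2^t. (cmod (psi_amp t \<omega> x))\<^sup>2)
     = (\<Sum>j<(2::nat)^t. (cmod (cis (2 * pi * real j * \<omega>) / complex_of_real (sqrt (2 ^ t))))\<^sup>2)"
    unfolding psi_amp_def by (rule qft_unitary)
  also have "\<dots> = (\<Sum>j<(2::nat)^t. 1 / 2 ^ t)"
    by (intro sum.cong refl) (simp add: norm_divide power_divide)
  also have "\<dots> = 1" by simp
  finally show ?thesis .
qed

lemma psi_exact:
  assumes "\<omega> - real m / 2 ^ t = real_of_int n"
  shows "cmod (psi_amp t \<omega> m) = 1"
proof -
  have e: "cis (2 * pi * real j * \<omega>) * cis (- 2 * pi * real j * real m / 2 ^ t) = 1" for j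
  proof -
    have "cis (2 * pi * real j * \<omega>) * cis (- 2 * pi * real j * real m / 2 ^ t)
        = cis (2 * pi * (real j * (\<omega> - real m / 2 ^ t)))"
      by (simp add: cis_mult algebra_simps)
    also have "\<dots> = 1" unfolding assms by (rule cis_multiple_2pi) simp
    finally show ?thesis .
  qed
  have s: "complex_of_real (sqrt (2 ^ t)) * complex_of_real (sqrt (2 ^ t)) = 2 ^ t"
    by (simp flip: of_real_mult)
  have "psi_amp t \<omega> m = (\<Sum>j<(2::nat)^t. cis (2 * pi * real j * \<omega>) * cis (- 2 * pi * real j * real m / 2 ^ t))
           / (complex_of_real (sqrt (2 ^ t)) * complex_of_real (sqrt (2 ^ t)))"
    unfolding psi_amp_def qft_inv_def by (simp add: sum_divide_distrib mult_ac)
  also have "\<dots> = 1" unfolding e s by simp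
  finally show ?thesis by simp
qed

lemma inj_sum_orth:
  fixes A B :: "'q \<Rightarrow> complex"
  assumes "finite Q" "finite C" "inj_on g Q" "g ` Q \<subseteq> C"
  shows "(\<Sum>c\<in>C. (\<Sum>q\<in>Q. if c = g q then A q else 0) * cnj (\<Sum>q\<in>Q. if c = g q then B q else 0))
       = (\<Sum>q\<in>Q. A q * cnj (B q))"
proof -
  have "(\<Sum>c\<in>C. (\<Sum>q\<in>Q. if c = g q then A q else 0) * cnj (\<Sum>q\<in>Q. if c = g q then B q else 0))
     = (\<Sum>c\<in>C. \<Sum>q\<in>Q. \<Sum>q'\<in>Q. (if c = g q then A q else 0) * cnj (if c = g q' then B q' else 0))"
    by (simp add: sum_product cnj_sum)
  also have "\<dots> = (\<Sum>q\<in>Q. \<Sum>c\<in>C. \<Sum>q'\<in>Q. (if c = g q then A q else 0) * cnj (if c = g q' then B q' else 0))"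
    by (rule sum.swap)
  also have "\<dots> = (\<Sum>q\<in>Q. \<Sum>q'\<in>Q. \<Sum>c\<in>C. (if c = g q then A q else 0) * cnj (if c = g q' then B q' else 0))"
    by (rule sum.cong[OF refl], rule sum.swap)
  also have "\<dots> = (\<Sum>q\<in>Q. \<Sum>q'\<in>Q. if q' = q then A q * cnj (B q) else 0)"
  proof (intro sum.cong refl)
    fix q q' assume qq: "q \<in> Q" "q' \<in> Q"
    have "(\<Sum>c\<in>C. (if c = g q then A q else 0) * cnj (if c = g q' then B q' else 0))
       = (\<Sum>c\<in>C. if c = g q then (if g q = g q' then A q * cnj (B q') else 0) else 0)"
      by (intro sum.cong refl) auto
    also have "\<dots> = (if g q = g q' then A q * cnj (B q') else 0)"
      using assms qq by (simp add: sum.delta' subset_iff)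
    also have "\<dots> = (if q' = q then A q * cnj (B q) else 0)"
      using assms(3) qq by (auto simp: inj_on_def)
    finally show "(\<Sum>c\<in>C. (if c = g q then A q else 0) * cnj (if c = g q' then B q' else 0))
       = (if q' = q then A q * cnj (B q) else 0)" .
  qed
  also have "\<dots> = (\<Sum>q\<in>Q. A q * cnj (B q))"
    using assms(1) by simp
  finally show ?thesis .
qed


lemma ord_inj:
  fixes a N r :: nat
  assumes "coprime a N" "r = ord N a"
  shows "inj_on (\<lambda>q. a ^ q mod N) {..<r}"
proof (rule inj_onI)
  have gen: "q = q'" if "q \<le> q'" "q' < r" "a ^ q mod N = a ^ q' mod N" for q q'
  proof (rule ccontr)
    assume ne: "q \<noteq> q'"
    have X: "[a ^ q * a ^ (q' - q) = a ^ q * 1] (mod N)"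
      using that by (simp add: cong_def power_add[symmetric])
    hence "[a ^ (q' - q) = 1] (mod N)"
    proof -
      have cp: "coprime (a ^ q) N" using assms(1) by simp
      show ?thesis using X cong_mult_lcancel_nat[OF cp] by blast
    qed
    hence "r dvd q' - q" using assms(2) ord_divides by blast
    moreover have "0 < q' - q" "q' - q < r" using that ne by auto
    ultimately show False using nat_dvd_not_less by blast
  qed
  fix q q' assume "q \<in> {..<r}" "q' \<in> {..<r}" "a ^ q mod N = a ^ q' mod N"
  then show "q = q'" using gen[of q q'] gen[of q' q] by (cases "q \<le> q'") auto
qed

lemma u_orth:
  assumes "coprime a N" "r = ord N a" "N \<le> 2 ^ L" "0 < N" "s < r" "s' < r"
  shows "(\<Sum>c<2^L. u_amp N a r s c * cnj (u_amp N a r s' c)) = (if s = s' then 1 else 0)"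
proof -
  have r0: "r > 0" using assms(5) by simp
  let ?g = "\<lambda>q. a ^ q mod N"
  let ?A = "\<lambda>s q. cis (- 2 * pi * real s * real q / real r) / complex_of_real (sqrt (real r))"
  have u: "u_amp N a r s c = (\<Sum>q\<in>{..<r}. if c = ?g q then ?A s q else 0)" for s c
    unfolding u_amp_def sum_distrib_left by (intro sum.cong refl) auto
  have "(\<Sum>c<2^L. u_amp N a r s c * cnj (u_amp N a r s' c)) = (\<Sum>q\<in>{..<r}. ?A s q * cnj (?A s' q))"
    unfolding u
  proof (rule inj_sum_orth)
    show "inj_on ?g {..<r}" using ord_inj assms by blast
    show "?g ` {..<r} \<subseteq> {..<2^L}"
    proof
      fix x assume "x \<in> ?g ` {..<r}"
      then obtain q where "x = a ^ q mod N" by blast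
      then have "x < N" using assms(4) by simp
      then show "x \<in> {..<2^L}" using assms(3) by simp
    qed
  qed auto
  also have "\<dots> = (\<Sum>q<r. cis (2 * pi * real_of_int (int s' - int s) * real q / real r)) / of_nat r"
  proof -
    have s: "complex_of_real (sqrt (real r)) * complex_of_real (sqrt (real r)) = of_nat r"
      by (simp flip: of_real_mult)
    have "?A s q * cnj (?A s' q) = cis (2 * pi * real_of_int (int s' - int s) * real q / real r) / of_nat r" for q
    proof -
      have a: "- 2 * pi * real s * real q / real r + 2 * pi * real s' * real q / real r
         = 2 * pi * real_of_int (int s' - int s) * real q / real r"
        using r0 by (simp add: field_simps)
      have "?A s q * cnj (?A s' q)
          = (cis (- 2 * pi * real s * real q / real r) * cis (2 * pi * real s' * real q / real r))
            / (complex_of_real (sqrt (real r)) * complex_of_real (sqrt (real r)))"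
        by (simp add: cis_cnj)
      also have "\<dots> = cis (2 * pi * real_of_int (int s' - int s) * real q / real r) / of_nat r"
        unfolding s cis_mult a ..
      finally show ?thesis .
    qed
    then show ?thesis by (simp add: sum_divide_distrib)
  qed
  also have "\<dots> = (if s = s' then 1 else 0)"
  proof -
    have d: "int r dvd (int s' - int s) \<longleftrightarrow> s = s'"
    proof
      assume h: "int r dvd (int s' - int s)"
      have "\<bar>int s' - int s\<bar> < int r" using assms by linarith
      with h show "s = s'" using dvd_imp_le_int[of "int s' - int s" "int r"] by fastforce
    qed simp
    show ?thesis unfolding cis_geom[OF r0] using d r0 by simp
  qed
  finally show ?thesis .
qed


theorem lemma2:
  fixes L k N a r s0 :: nat and \<epsilon> :: real
  assumes "L \<ge> 1" and "k \<ge> 1" and "k dvd L"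
    and "2 ^ (L - 1) \<le> N" and "N < 2 ^ L"
    and "0 < a" and "a < N" and "coprime a N"
    and "r = ord N a"
    and "\<epsilon> > 0"
    and "s0 < r"
    and "r dvd 2 ^ (l_param L k k + 1) * s0"
  shows "prob_Ak L k \<epsilon> N a r
           ((2 * bin_digit s0 r (l_param L k k) + bin_digit s0 r (l_param L k k + 1))
              * 2 ^ (t_param L k \<epsilon> k - 2))
         \<ge> 1 / real r"
proof -
  define l where "l = l_param L k k"
  define T where "T = t_param L k \<epsilon>"
  define m where "m = (2 * bin_digit s0 r l + bin_digit s0 r (l + 1)) * 2 ^ (T k - 2)"
  define I where "I = {1..k}"
  define B where "B = (\<lambda>j. {..<(2::nat) ^ T j})"
  define \<psi> where "\<psi> = (\<lambda>s j x. psi_amp (T j) (2 ^ (l_param L k j - 1) * real s / real r) x)"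
  have r0: "r > 0" using assms(11) by simp
  have Nle: "N \<le> 2 ^ L" using assms(5) by simp
  have N0: "0 < N" using assms(6,7) by simp
  have kI: "k \<in> I" using assms(2) by (simp add: I_def)
  have fI: "finite I" by (simp add: I_def)
  obtain d where d: "L = k * d" using assms(3) by blast
  have d1: "d \<ge> 1" using d assms(1) by (cases d) auto
  have Ldiv: "L div k = d" using d assms(2) by simp
  have l_eq: "l = (k - 1) * d + 1" by (simp add: l_def l_param_def Ldiv)
  have l1: "l \<ge> 1" by (simp add: l_eq)
  have lL: "l \<le> L"
  proof -
    have "(k - 1) * d + d = k * d" using assms(2) by (cases k) auto
    then show ?thesis using d d1 l_eq by linarith
  qed
  have Tk: "T k = 2 * L + 2 - l + p_param k \<epsilon>"
    by (simp add: T_def t_param_def l_def l_param_def)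
  have T2: "T k \<ge> 2" using Tk lL by linarith
  obtain c where c: "2 ^ (l + 1) * s0 = r * c" using assms(12) l_def by (metis dvd_def)
  have bd1: "bin_digit s0 r (l + 1) = c mod 2"
    using c r0 by (simp add: bin_digit_def)
  have bd0: "bin_digit s0 r l = (c div 2) mod 2"
  proof -
    have "2 ^ l * s0 div r = (2 * (2 ^ l * s0)) div (2 * r)" by simp
    also have "2 * (2 ^ l * s0) = c * r" using c by (simp add: mult_ac)
    also have "c * r div (2 * r) = c div 2" using r0 by (simp add: div_mult_mult2)
    finally show ?thesis by (simp add: bin_digit_def)
  qed
  have c4: "2 * ((c div 2) mod 2) + c mod 2 = c mod 4"
    by (metis mod_mult2_eq mult.commute num_double numeral_times_numeral)
  have m_eq: "m = (c mod 4) * 2 ^ (T k - 2)"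
    unfolding m_def bd0 bd1 c4 ..
  have TT: "(2::nat) ^ T k = 4 * 2 ^ (T k - 2)"
  proof -
    have "T k = 2 + (T k - 2)" using T2 by simp
    then show ?thesis by (metis power_add numeral_Bit0 power2_eq_square numeral_times_numeral num_double mult_2 power_one_right)
  qed
  have mB: "m < 2 ^ T k" unfolding m_eq TT by simp
  have om: "2 ^ (l_param L k k - 1) * real s0 / real r - real m / 2 ^ T k = real_of_int (int (c div 4))"
  proof -
    have "real m / 2 ^ T k = real (c mod 4) / 4"
      unfolding m_eq using TT by (simp add: field_simps) (metis of_nat_mult of_nat_numeral of_nat_power)
    moreover have "2 ^ (l_param L k k - 1) * real s0 / real r = real c / 4"
    proof -
      have "(4::real) * 2 ^ (l - 1) = 2 ^ (l + 1)"
        using l1 by (cases l) (auto simp: power_Suc)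
      then have "4 * (2 ^ (l - 1) * real s0) = real r * real c"
        using c by (metis mult.assoc of_nat_mult of_nat_numeral of_nat_power)
      then show ?thesis using r0 by (simp add: l_def[symmetric] field_simps)
    qed
    moreover have "real c = 4 * real (c div 4) + real (c mod 4)"
      by (metis of_nat_add of_nat_mult of_nat_numeral div_mult_mod_eq mult.commute)
    ultimately have "2 ^ (l_param L k k - 1) * real s0 / real r - real m / 2 ^ T k = real (c div 4)"
      by linarith
    then show ?thesis by simp
  qed
  have psik: "cmod (\<psi> s0 k m) = 1"
    unfolding \<psi>_def by (rule psi_exact[OF om])
  define B' where "B' = B(k := {m})"
  have set_eq: "{xs \<in> PiE {1..k} (\<lambda>j. {..<(2::nat) ^ t_param L k \<epsilon> j}). xs k = m} = PiE I B'"
  proof (rule Set.set_eqI)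
    fix xs :: "nat \<Rightarrow> nat"
    have a: "xs \<in> PiE {1..k} (\<lambda>j. {..<(2::nat) ^ t_param L k \<epsilon> j}) \<longleftrightarrow> (\<forall>j\<in>I. xs j \<in> B j) \<and> xs \<in> extensional I"
      unfolding PiE_iff I_def B_def T_def ..
    have b: "xs \<in> PiE I B' \<longleftrightarrow> (\<forall>j\<in>I. xs j \<in> B' j) \<and> xs \<in> extensional I"
      unfolding PiE_iff ..
    have c: "(\<forall>j\<in>I. xs j \<in> B' j) \<longleftrightarrow> (\<forall>j\<in>I. xs j \<in> B j) \<and> xs k = m"
      using kI mB by (auto simp: B'_def B_def)
    show "xs \<in> {xs \<in> PiE {1..k} (\<lambda>j. {..<(2::nat) ^ t_param L k \<epsilon> j}). xs k = m} \<longleftrightarrow> xs \<in> PiE I B'"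
      using a b c by blast
  qed
  have inner: "(\<Sum>c<2^L. (cmod (phi_final_amp L k \<epsilon> N a r xs c))\<^sup>2)
      = (\<Sum>s<r. (\<Prod>j\<in>I. (cmod (\<psi> s j (xs j)))\<^sup>2) / real r)" for xs
  proof -
    have ph: "phi_final_amp L k \<epsilon> N a r xs c
       = (\<Sum>s\<in>{..<r}. ((\<Prod>j\<in>I. \<psi> s j (xs j)) / complex_of_real (sqrt (real r))) * u_amp N a r s c)" for c
      unfolding phi_final_amp_def \<psi>_def I_def T_def sum_distrib_left by (simp add: mult_ac)
    have "(\<Sum>c<2^L. (cmod (phi_final_amp L k \<epsilon> N a r xs c))\<^sup>2)
       = (\<Sum>s\<in>{..<r}. (cmod ((\<Prod>j\<in>I. \<psi> s j (xs j)) / complex_of_real (sqrt (real r))))\<^sup>2)"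
      unfolding ph
    proof (rule orth_expand)
      fix s s' assume "s \<in> {..<r}" "s' \<in> {..<r}"
      then show "(\<Sum>c\<in>{..<2^L}. u_amp N a r s c * cnj (u_amp N a r s' c)) = (if s = s' then 1 else 0)"
        using u_orth[OF assms(8,9) Nle N0] by auto
    qed auto
    also have "\<dots> = (\<Sum>s<r. (\<Prod>j\<in>I. (cmod (\<psi> s j (xs j)))\<^sup>2) / real r)"
    proof (intro sum.cong refl)
      fix s
      have "(cmod ((\<Prod>j\<in>I. \<psi> s j (xs j)) / complex_of_real (sqrt (real r))))\<^sup>2
          = (cmod (\<Prod>j\<in>I. \<psi> s j (xs j)))\<^sup>2 / real r"
        by (simp add: norm_divide power_divide)
      also have "\<dots> = (\<Prod>j\<in>I. (cmod (\<psi> s j (xs j)))\<^sup>2) / real r"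
        by (simp add: prod_norm[symmetric] prod_power_distrib)
      finally show "(cmod ((\<Prod>j\<in>I. \<psi> s j (xs j)) / complex_of_real (sqrt (real r))))\<^sup>2
          = (\<Prod>j\<in>I. (cmod (\<psi> s j (xs j)))\<^sup>2) / real r" .
    qed
    finally show ?thesis .
  qed
  have "prob_Ak L k \<epsilon> N a r m = (\<Sum>xs\<in>PiE I B'. \<Sum>s<r. (\<Prod>j\<in>I. (cmod (\<psi> s j (xs j)))\<^sup>2) / real r)"
    unfolding prob_Ak_def set_eq inner ..
  also have "\<dots> = (\<Sum>s<r. (\<Sum>xs\<in>PiE I B'. \<Prod>j\<in>I. (cmod (\<psi> s j (xs j)))\<^sup>2) / real r)"
    by (subst sum.swap) (simp add: sum_divide_distrib)
  also have "\<dots> = (\<Sum>s<r. (\<Prod>j\<in>I. \<Sum>y\<in>B' j. (cmod (\<psi> s j y))\<^sup>2) / real r)"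
  proof -
    have fB: "\<And>j. finite (B' j)" by (simp add: B'_def B_def)
    show ?thesis using fI fB by (simp add: prod_sum_PiE)
  qed
  also have "\<dots> = (\<Sum>s<r. (cmod (\<psi> s k m))\<^sup>2 / real r)"
  proof (intro sum.cong refl)
    fix s
    have "(\<Prod>j\<in>I. \<Sum>y\<in>B' j. (cmod (\<psi> s j y))\<^sup>2) = (\<Prod>j\<in>I. if j = k then (cmod (\<psi> s k m))\<^sup>2 else 1)"
    proof (intro prod.cong refl)
      fix j assume "j \<in> I"
      show "(\<Sum>y\<in>B' j. (cmod (\<psi> s j y))\<^sup>2) = (if j = k then (cmod (\<psi> s k m))\<^sup>2 else 1)"
        by (simp add: B'_def B_def \<psi>_def psi_norm)
    qed
    also have "\<dots> = (cmod (\<psi> s k m))\<^sup>2" using fI kI by simp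
    finally show "(\<Prod>j\<in>I. \<Sum>y\<in>B' j. (cmod (\<psi> s j y))\<^sup>2) / real r = (cmod (\<psi> s k m))\<^sup>2 / real r"
      by simp
  qed
  also have "\<dots> \<ge> (cmod (\<psi> s0 k m))\<^sup>2 / real r"
    by (rule member_le_sum) (use assms(11) in auto)
  finally have "prob_Ak L k \<epsilon> N a r m \<ge> 1 / real r" using psik by simp
  then show ?thesis by (simp add: m_def l_def T_def)
qed

end
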